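(* Let $f\colon2^{\mathcal N}\to\mathbb R_{\ge0}$ be a non-negative submodular function, $\mathbf p$ a positive price vector over $\mathcal N$, $s\in\mathcal N$ and $\gamma\in(0,1)$. Let $\mathcal N^*=(\mathcal N\setminus\{s\})\cup\{\sigma_1,\sigma_2\}$ with new elements $\sigma_1,\sigma_2$, and define $f^*\colon2^{\mathcal N^*}\to\mathbb R_{\ge0}$ by $$f^*(S)=f(\widehat S)+\gamma\,\big(f(\widehat S\cup\{s\})-f(\widehat S)\big)\,\mathbb I[\sigma_1\in S]+(1-\gamma)\,\big(f(\widehat S\cup\{s\})-f(\widehat S)\big)\,\mathbb I[\sigma_2\in S],$$ where $\widehat S=S\setminus\{\sigma_1,\sigma_2\}$ and $\mathbb I[\cdot]$ is the indicator. Then $f^*$ is submodular.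
   Context: $f$ is submodular if $f(S\cup\{u\})-f(S)\ge f(T\cup\{u\})-f(T)$ for all $S\subseteq T$ and $u\notin T$. (The construction of $f^*$, together with prices $p^*_{\sigma_1}=\gamma p_s$, $p^*_{\sigma_2}=(1-\gamma)p_s$ and $p^*_x=p_x$ otherwise, is called a $\gamma$-split of $s$.) *)

theory Defs
  imports Complex_Main
begin

definition submodular_on :: "'a set \<Rightarrow> ('a set \<Rightarrow> real) \<Rightarrow> bool" where
  "submodular_on N f \<longleftrightarrow>
     (\<forall>S T u. S \<subseteq> T \<longrightarrow> T \<subseteq> N \<longrightarrow> u \<in> N \<longrightarrow> u \<notin> T \<longrightarrow>
        f (S \<union> {u}) - f S \<ge> f (T \<union> {u}) - f T)"

definition split_fun :: "('a set \<Rightarrow> real) \<Rightarrow> 'a \<Rightarrow> real \<Rightarrow> 'a \<Rightarrow> 'a \<Rightarrow> 'a set \<Rightarrow> real" where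
  "split_fun f s \<gamma> \<sigma>1 \<sigma>2 S =
     (let Sh = S - {\<sigma>1, \<sigma>2}; m = f (Sh \<union> {s}) - f Sh in
      f Sh + \<gamma> * m * (if \<sigma>1 \<in> S then 1 else 0)
           + (1 - \<gamma>) * m * (if \<sigma>2 \<in> S then 1 else 0))"

end

theory Submission
  imports Defs
begin

lemma sub_use:
  assumes "submodular_on N f" "S \<subseteq> T" "T \<subseteq> N" "u \<in> N" "u \<notin> T"
  shows "f (S \<union> {u}) - f S \<ge> f (T \<union> {u}) - f T"
  using assms unfolding submodular_on_def by blast

lemma key_ineq:
  fixes AS AT BS BT cS cT :: real
  assumes "AS \<ge> AT" "BS \<ge> BT" "AT \<ge> BT" "0 \<le> cS" "cS \<le> cT" "cT \<le> 1"
  shows "(1 - cS) * AS + cS * BS \<ge> (1 - cT) * AT + cT * BT"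
proof -
  have "(1 - cS) * (AS - AT) \<ge> 0" using assms by simp
  moreover have "cS * (BS - BT) \<ge> 0" using assms by simp
  moreover have "(cT - cS) * (AT - BT) \<ge> 0" using assms by simp
  ultimately show ?thesis by (simp add: algebra_simps)
qed

lemma aux_ineq:
  fixes a b cS cT D X Y :: real
  assumes "D * (X - a) \<ge> D * (Y - b)" and that: "D = E - cT"
  shows "a + (cS + D) * (X - a) - (a + cS * (X - a)) \<ge> b + E * (Y - b) - (b + cT * (Y - b))"
proof -
  have "a + (cS + D) * (X - a) - (a + cS * (X - a)) = D * (X - a)" by (simp add: algebra_simps)
  moreover have "b + E * (Y - b) - (b + cT * (Y - b)) = D * (Y - b)" unfolding that by (simp add: algebra_simps)
  ultimately show ?thesis using assms by simp
qed

lemma diff_lem: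
  fixes x1 x2 a cSu cS D X :: real
  assumes "x1 = a + cSu * X" "x2 = a + cS * X" "cSu = cS + D"
  shows "x1 - x2 = D * X"
  unfolding assms by (simp add: algebra_simps)

theorem lemma5p20:
  fixes N :: "'a set" and f :: "'a set \<Rightarrow> real" and p :: "'a \<Rightarrow> real"
    and s \<sigma>1 \<sigma>2 :: 'a and \<gamma> :: real
  assumes "finite N"
    and "\<And>S. S \<subseteq> N \<Longrightarrow> f S \<ge> 0"
    and sm: "submodular_on N f"
    and "\<And>x. x \<in> N \<Longrightarrow> p x > 0"
    and sN: "s \<in> N"
    and g0: "0 < \<gamma>" and g1: "\<gamma> < 1"
    and n1: "\<sigma>1 \<notin> N" and n2: "\<sigma>2 \<notin> N" and d: "\<sigma>1 \<noteq> \<sigma>2"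
  shows "submodular_on ((N - {s}) \<union> {\<sigma>1, \<sigma>2}) (split_fun f s \<gamma> \<sigma>1 \<sigma>2)"
  unfolding submodular_on_def
proof (intro allI impI)
  fix S T u
  assume ST: "S \<subseteq> T" and TN: "T \<subseteq> (N - {s}) \<union> {\<sigma>1, \<sigma>2}"
    and uN: "u \<in> (N - {s}) \<union> {\<sigma>1, \<sigma>2}" and uT: "u \<notin> T"
  define Sh where "Sh = S - {\<sigma>1, \<sigma>2}"
  define Th where "Th = T - {\<sigma>1, \<sigma>2}"
  define c where "c X = \<gamma> * (if \<sigma>1 \<in> X then 1 else 0) + (1 - \<gamma>) * (if \<sigma>2 \<in> X then 1 else 0)" for X
  have F: "split_fun f s \<gamma> \<sigma>1 \<sigma>2 X = f (X - {\<sigma>1, \<sigma>2}) + c X * (f ((X - {\<sigma>1, \<sigma>2}) \<union> {s}) - f (X - {\<sigma>1, \<sigma>2}))" for X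
    unfolding split_fun_def c_def Let_def by (simp add: algebra_simps)
  have ShTh: "Sh \<subseteq> Th" using ST unfolding Sh_def Th_def by blast
  have ThN: "Th \<subseteq> N" "s \<notin> Th" using TN unfolding Th_def by auto
  have mono_m: "f (Sh \<union> {s}) - f Sh \<ge> f (Th \<union> {s}) - f Th"
    using sub_use[OF sm ShTh ThN(1) sN ThN(2)] .
  have cS: "0 \<le> c S" "c S \<le> c T" "c T \<le> 1"
    using g0 g1 ST unfolding c_def by (auto split: if_splits)
  show "split_fun f s \<gamma> \<sigma>1 \<sigma>2 (S \<union> {u}) - split_fun f s \<gamma> \<sigma>1 \<sigma>2 S
        \<ge> split_fun f s \<gamma> \<sigma>1 \<sigma>2 (T \<union> {u}) - split_fun f s \<gamma> \<sigma>1 \<sigma>2 T"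
  proof (cases "u = \<sigma>1 \<or> u = \<sigma>2")
    case True
    have e1: "(S \<union> {u}) - {\<sigma>1, \<sigma>2} = Sh" "(T \<union> {u}) - {\<sigma>1, \<sigma>2} = Th"
      using True unfolding Sh_def Th_def by auto
    have w: "c (X \<union> {u}) = c X + (if u = \<sigma>1 then \<gamma> else 1 - \<gamma>)" if "u \<notin> X" for X
      using True d that unfolding c_def by (cases "u = \<sigma>1") auto
    have uS: "u \<notin> S" using uT ST by blast
    have cu: "c (S \<union> {u}) = c S + (c (T \<union> {u}) - c T)" "c (T \<union> {u}) - c T \<ge> 0"
      using w[OF uS] w[OF uT] g0 g1 by auto
    have "(c (T \<union> {u}) - c T) * (f (Sh \<union> {s}) - f Sh) \<ge> (c (T \<union> {u}) - c T) * (f (Th \<union> {s}) - f Th)"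
      using cu(2) mono_m by (rule mult_left_mono[rotated])
    moreover have "split_fun f s \<gamma> \<sigma>1 \<sigma>2 (S \<union> {u}) - split_fun f s \<gamma> \<sigma>1 \<sigma>2 S
        = (c (T \<union> {u}) - c T) * (f (Sh \<union> {s}) - f Sh)"
    proof -
      have h1: "split_fun f s \<gamma> \<sigma>1 \<sigma>2 (S \<union> {u}) = f Sh + c (S \<union> {u}) * (f (Sh \<union> {s}) - f Sh)"
        using F[of "S \<union> {u}"] e1(1) by simp
      have h2: "split_fun f s \<gamma> \<sigma>1 \<sigma>2 S = f Sh + c S * (f (Sh \<union> {s}) - f Sh)"
        using F[of S] unfolding Sh_def by simp
      show ?thesis by (rule diff_lem[OF h1 h2 cu(1)])
    qed
    moreover have "split_fun f s \<gamma> \<sigma>1 \<sigma>2 (T \<union> {u}) - split_fun f s \<gamma> \<sigma>1 \<sigma>2 T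
        = (c (T \<union> {u}) - c T) * (f (Th \<union> {s}) - f Th)"
    proof -
      have "split_fun f s \<gamma> \<sigma>1 \<sigma>2 (T \<union> {u}) = f Th + c (T \<union> {u}) * (f (Th \<union> {s}) - f Th)"
        using F[of "T \<union> {u}"] e1(2) by simp
      moreover have "split_fun f s \<gamma> \<sigma>1 \<sigma>2 T = f Th + c T * (f (Th \<union> {s}) - f Th)"
        using F[of T] unfolding Th_def by simp
      ultimately show ?thesis by (simp add: algebra_simps)
    qed
    ultimately show ?thesis by simp
  next
    case False
    have uN': "u \<in> N" "u \<noteq> s" using False uN by auto
    have e1: "(S \<union> {u}) - {\<sigma>1, \<sigma>2} = Sh \<union> {u}" "(T \<union> {u}) - {\<sigma>1, \<sigma>2} = Th \<union> {u}"
      using False unfolding Sh_def Th_def by auto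
    have cu: "c (S \<union> {u}) = c S" "c (T \<union> {u}) = c T"
      using False unfolding c_def by auto
    have uTh: "u \<notin> Th" "u \<notin> Th \<union> {s}" using uT uN' unfolding Th_def by auto
    have ThsN: "Th \<union> {s} \<subseteq> N" using ThN sN by auto
    have A: "f (Sh \<union> {u}) - f Sh \<ge> f (Th \<union> {u}) - f Th"
      using sub_use[OF sm ShTh ThN(1) uN'(1) uTh(1)] .
    have B: "f (Sh \<union> {s} \<union> {u}) - f (Sh \<union> {s}) \<ge> f (Th \<union> {s} \<union> {u}) - f (Th \<union> {s})"
      by (rule sub_use[OF sm _ ThsN uN'(1) uTh(2)]) (use ShTh in blast)
    have C: "f (Th \<union> {u}) - f Th \<ge> f (Th \<union> {s} \<union> {u}) - f (Th \<union> {s})"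
      by (rule sub_use[OF sm _ ThsN uN'(1) uTh(2)]) blast
    have K: "(1 - c S) * (f (Sh \<union> {u}) - f Sh) + c S * (f (Sh \<union> {s} \<union> {u}) - f (Sh \<union> {s}))
      \<ge> (1 - c T) * (f (Th \<union> {u}) - f Th) + c T * (f (Th \<union> {s} \<union> {u}) - f (Th \<union> {s}))"
      by (rule key_ineq[OF A B C cS])
    have q1: "Sh \<union> {u} \<union> {s} = Sh \<union> {s} \<union> {u}" "Th \<union> {u} \<union> {s} = Th \<union> {s} \<union> {u}" by auto
    show ?thesis unfolding F e1 cu Sh_def[symmetric] Th_def[symmetric] q1 using K
      by (simp add: algebra_simps)
  qed
qed

end
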